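(* Let $m\ge 2$. Then: (1) If an arithmetic box space $\square_{(G_m(N_k))_k}G_m$ has property $D_\alpha$ for some $\alpha\in(0,1]$, then $\alpha\le \tfrac12$. (2) There exists an arithmetic box space of $G_m$ with property $D_{1/2}$; for instance the one given by $N_k=(m^2-1)^k$, for which $\operatorname{ord}_m(N_k)=2(m^2-1)^{k-1}$ for all $k\ge1$. (3) There exists an arithmetic box space of $G_m$ which does not have property $D_\alpha$ for any $\alpha\in(0,1/2]$; for instance the one given by $N_k=m^{2^k}-1$. (4) Fix $\alpha<1$. Every arithmetic box space $\square_{(G_m(N_k))_k}G_m$ is covered by some box space of $G_m$ having property $D_\alpha$, i.e. there is a box space $\square_{(M_k)}G_m$ with property $D_\alpha$ and $M_k\subseteq G_m(N_k)$ for all $k$.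
   Context: Fix an integer $m\ge 2$. Let $G_m$ be the subgroup of $GL_2(\mathbb Z[1/m])$ consisting of all matrices $\begin{pmatrix} m^k & r\\ 0&1\end{pmatrix}$ with $k\in\mathbb Z$, $r\in\mathbb Z[1/m]$; it is generated by $A=\begin{pmatrix}1&1\\0&1\end{pmatrix}$ and $T=\begin{pmatrix}m&0\\0&1\end{pmatrix}$ and is isomorphic to $BS(1,m)=\langle a,t\mid tat^{-1}=a^m\rangle$ via $a\mapsto A$, $t\mapsto T$. For an integer $N\ge1$ coprime to $m$, $G_m(N)$ denotes the kernel of the reduction map $G_m\to GL_2(\mathbb Z/N\mathbb Z)$ (using $\mathbb Z[1/m]/N\mathbb Z[1/m]\cong\mathbb Z/N\mathbb Z$), and $\operatorname{ord}_m(N)$ denotes the multiplicative order of $m$ modulo $N$. For a finitely generated residually finite group $G$ with finite generating set $S$ and a decreasing sequence $(H_k)_{k\ge1}$ of finite-index normal subgroups with trivial intersection, the box space $\square_{(H_k)}G$ is the family of finite Cayley graphs $\mathrm{Cay}(G/H_k,S)$. For $0<\alpha\le1$, the box space has property $D_\alpha$ if there is $C>0$ with $\operatorname{diam}\mathrm{Cay}(G/H_k,S)\ge C\,|G/H_k|^\alpha$ for all $k$ (this does not depend on $S$). An arithmetic box space of $G_m$ is a box space $\square_{(G_m(N_k))_k}G_m$ where $(N_k)_{k\ge1}$ is a strictly increasing sequence of integers $\ge2$ coprime to $m$ with $N_k\mid N_{k+1}$ for all $k$ (generating set $\{A,T\}$). A box space $\square_{(H'_k)}G$ covers $\square_{(H_k)}G$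 if $H'_k\subseteq H_k$ for all $k$. *)

theory Defs
  imports Complex_Main "HOL-Algebra.Coset" "HOL-Number_Theory.Pocklington"
begin

text \<open>Edges are undirected, so the
  generators and their inverses are allowed.\<close>
definition cay_dist :: "('a, 'b) monoid_scheme \<Rightarrow> 'a set \<Rightarrow> 'a set \<Rightarrow> 'a set \<Rightarrow> 'a set \<Rightarrow> nat" where
  "cay_dist G S H c d =
     (LEAST n. \<exists>ws. length ws = n \<and> set ws \<subseteq> S \<union> m_inv G ` S \<and>
                    r_coset G c (foldr (monoid.mult G) ws (monoid.one G)) = d)"

definition cay_diam :: "('a, 'b) monoid_scheme \<Rightarrow> 'a set \<Rightarrow> 'a set \<Rightarrow> nat" where
  "cay_diam G S H = Max {cay_dist G S H c d | c d. c \<in> RCOSETS G H \<and> d \<in> RCOSETS G H}"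

definition box_space :: "('a, 'b) monoid_scheme \<Rightarrow> (nat \<Rightarrow> 'a set) \<Rightarrow> bool" where
  "box_space G H \<longleftrightarrow>
     group G \<and>
     (\<forall>k\<ge>1. normal (H k) G \<and> finite (RCOSETS G (H k)) \<and> H (Suc k) \<subseteq> H k) \<and>
     (\<Inter>k\<in>{1..}. H k) = {monoid.one G}"

definition property_D :: "('a, 'b) monoid_scheme \<Rightarrow> 'a set \<Rightarrow> (nat \<Rightarrow> 'a set) \<Rightarrow> real \<Rightarrow> bool" where
  "property_D G S H \<alpha> \<longleftrightarrow>
     (\<exists>C>0. \<forall>k\<ge>1. real (cay_diam G S (H k)) \<ge> C * real (card (RCOSETS G (H k))) powr \<alpha>)"

definition Zinv :: "nat \<Rightarrow> rat set" where
  "Zinv m = {r. \<exists>a::int. \<exists>j::nat. r = of_int a / of_nat m ^ j}"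

text \<open>G_m: the matrix (m^k, r; 0, 1) is represented by the pair (k, r);
  the multiplication is the matrix multiplication
  (m^k, r; 0,1)(m^l, s; 0,1) = (m^(k+l), m^k s + r; 0, 1).\<close>
definition Gm :: "nat \<Rightarrow> (int \<times> rat) monoid" where
  "Gm m = \<lparr> carrier = {(k, r). r \<in> Zinv m},
            monoid.mult = (\<lambda>(k, r) (l, s). (k + l, (of_nat m) powi k * s + r)),
            monoid.one = (0, 0) \<rparr>"

text \<open>The generators A = (1,1;0,1) and T = (m,0;0,1).\<close>
definition genA :: "int \<times> rat" where "genA = (0, 1)"
definition genT :: "int \<times> rat" where "genT = (1, 0)"

text \<open>Reduction Z[1/m] -> Z/NZ (via Z[1/m]/N Z[1/m] = Z/NZ), with values in {0..N-1}.\<close>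
definition red :: "nat \<Rightarrow> nat \<Rightarrow> rat \<Rightarrow> int" where
  "red m N x = (THE c. 0 \<le> c \<and> c < int N \<and> (\<exists>y\<in>Zinv m. x - of_int c = of_nat N * y))"

text \<open>G_m(N): the kernel of the reduction map G_m -> GL_2(Z/NZ), i.e. the elements whose
  reduced matrix (red(m^k), red(r); 0, 1) is the identity matrix.\<close>
definition Gm_cong :: "nat \<Rightarrow> nat \<Rightarrow> (int \<times> rat) set" where
  "Gm_cong m N = {(k, r) \<in> carrier (Gm m).
      red m N ((of_nat m) powi k) = red m N 1 \<and> red m N r = red m N 0}"

definition arith_seq :: "nat \<Rightarrow> (nat \<Rightarrow> nat) \<Rightarrow> bool" where
  "arith_seq m N \<longleftrightarrow>
     (\<forall>k\<ge>1. 2 \<le> N k \<and> coprime (N k) m \<and> N k < N (Suc k) \<and> N k dvd N (Suc k))"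

abbreviation arith_box :: "nat \<Rightarrow> (nat \<Rightarrow> nat) \<Rightarrow> nat \<Rightarrow> (int \<times> rat) set" where
  "arith_box m N \<equiv> (\<lambda>k. Gm_cong m (N k))"

end

theory Submission
  imports Defs
begin

locale gm = fixes m :: nat assumes m2: "2 \<le> m"
begin

abbreviation "G \<equiv> Gm m"
abbreviation "Z \<equiv> Zinv m"

lemma m_ne0[simp]: "m \<noteq> 0" using m2 by simp
lemma m0[simp]: "(of_nat m :: rat) \<noteq> 0" using m2 by simp
lemma mpos: "(of_nat m :: rat) > 0" using m2 by simp

lemma Zinv_iff: "x \<in> Z \<longleftrightarrow> (\<exists>a j. x = of_int a / of_nat m ^ j)"
  by (simp add: Zinv_def)

lemma Zinv_int[simp]: "of_int a \<in> Z"
  unfolding Zinv_iff by (rule exI[of _ a], rule exI[of _ 0]) simp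

lemma Zinv_nat[simp]: "of_nat a \<in> Z"
  using Zinv_int[of "int a"] by simp

lemma Zinv_0[simp]: "0 \<in> Z" using Zinv_int[of 0] by simp
lemma Zinv_1[simp]: "1 \<in> Z" using Zinv_int[of 1] by simp

lemma Zinv_add[intro]: assumes "x \<in> Z" "y \<in> Z" shows "x + y \<in> Z"
proof -
  obtain a j b l where x: "x = of_int a / of_nat m ^ j" and y: "y = of_int b / of_nat m ^ l"
    using assms unfolding Zinv_iff by blast
  have "x + y = of_int (a * int m ^ l + b * int m ^ j) / of_nat m ^ (j + l)"
    unfolding x y by (simp add: power_add add_frac_eq)
  thus ?thesis unfolding Zinv_iff by blast
qed

lemma Zinv_mult[intro]: assumes "x \<in> Z" "y \<in> Z" shows "x * y \<in> Z"
proof -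
  obtain a j b l where x: "x = of_int a / of_nat m ^ j" and y: "y = of_int b / of_nat m ^ l"
    using assms unfolding Zinv_iff by blast
  have "x * y = of_int (a * b) / of_nat m ^ (j + l)"
    unfolding x y by (simp add: field_simps power_add)
  thus ?thesis unfolding Zinv_iff by blast
qed

lemma Zinv_uminus[intro]: assumes "x \<in> Z" shows "- x \<in> Z"
proof -
  have "-x = of_int (-1) * x" by simp
  thus ?thesis using assms Zinv_mult[OF Zinv_int] by metis
qed

lemma Zinv_diff[intro]: assumes "x \<in> Z" "y \<in> Z" shows "x - y \<in> Z"
  using Zinv_add[OF assms(1) Zinv_uminus[OF assms(2)]] by simp

lemma Zinv_divpow[intro]: assumes "x \<in> Z" shows "x / of_nat m ^ n \<in> Z"
proof -
  obtain a j where x: "x = of_int a / of_nat m ^ j"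
    using assms unfolding Zinv_iff by blast
  have "x / of_nat m ^ n = of_int a / of_nat m ^ (j + n)"
    unfolding x by (simp add: field_simps power_add)
  thus ?thesis unfolding Zinv_iff by blast
qed

lemma Zinv_mpow[simp]: "(of_nat m :: rat) ^ n \<in> Z"
  using Zinv_nat[of "m ^ n"] by (simp del: Zinv_nat)

lemma Zinv_powi[intro]: "(of_nat m :: rat) powi k \<in> Z"
proof (cases "k \<ge> 0")
  case True
  then have "(of_nat m :: rat) powi k = of_nat (m ^ nat k)"
    by (metis of_nat_power power_int_of_nat nat_0_le)
  thus ?thesis by simp
next
  case False
  then have "(of_nat m :: rat) powi k = 1 / of_nat m ^ nat (-k)"
    by (metis nat_0_le neg_0_le_iff_le not_le power_int_minus_divide power_int_of_nat
        less_imp_le  minus_minus)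
  thus ?thesis using Zinv_divpow[OF Zinv_1] by simp
qed

lemma Gm_mult[simp]: "(k, r) \<otimes>\<^bsub>G\<^esub> (l, s) = (k + l, (of_nat m) powi k * s + r)"
  by (simp add: Gm_def)
lemma Gm_one[simp]: "\<one>\<^bsub>G\<^esub> = (0, 0)"
  by (simp add: Gm_def)
lemma Gm_carrier[simp]: "(k, r) \<in> carrier G \<longleftrightarrow> r \<in> Z"
  by (simp add: Gm_def)
lemma Gm_carrier': "x \<in> carrier G \<longleftrightarrow> snd x \<in> Z"
  by (cases x) simp

lemma powi_add': "(of_nat m :: rat) powi (k + l) = of_nat m powi k * of_nat m powi l"
  by (simp add: power_int_add)

lemma group_G: "group G"
proof (rule groupI)
  fix x y assume "x \<in> carrier G" "y \<in> carrier G"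
  thus "x \<otimes>\<^bsub>G\<^esub> y \<in> carrier G"
    by (cases x, cases y) auto
next
  show "\<one>\<^bsub>G\<^esub> \<in> carrier G" by simp
next
  fix x y z assume "x \<in> carrier G" "y \<in> carrier G" "z \<in> carrier G"
  thus "x \<otimes>\<^bsub>G\<^esub> y \<otimes>\<^bsub>G\<^esub> z = x \<otimes>\<^bsub>G\<^esub> (y \<otimes>\<^bsub>G\<^esub> z)"
    by (cases x, cases y, cases z) (auto simp: powi_add' algebra_simps)
next
  fix x assume "x \<in> carrier G" thus "\<one>\<^bsub>G\<^esub> \<otimes>\<^bsub>G\<^esub> x = x" by (cases x) auto
next
  fix x assume x: "x \<in> carrier G"
  obtain k r where kr: "x = (k, r)" by (cases x)
  have "(-k, - (of_nat m powi (-k)) * r) \<otimes>\<^bsub>G\<^esub> x = \<one>\<^bsub>G\<^esub>" by (simp add: kr)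
  moreover have "(-k, - (of_nat m powi (-k)) * r) \<in> carrier G" using x kr by auto
  ultimately show "\<exists>y\<in>carrier G. y \<otimes>\<^bsub>G\<^esub> x = \<one>\<^bsub>G\<^esub>" by blast
qed

lemma Gm_inv[simp]: assumes "r \<in> Z"
  shows "inv\<^bsub>G\<^esub> (k, r) = (-k, - (of_nat m powi (-k)) * r)"
  by (rule group.inv_equality[OF group_G]) (use assms in auto)

end

context gm
begin

definition zc :: "nat \<Rightarrow> rat \<Rightarrow> bool" where
  "zc N x \<longleftrightarrow> (\<exists>y\<in>Z. x = of_nat N * y)"

lemma zc_0[simp]: "zc N 0" unfolding zc_def by (rule bexI[of _ 0]) auto

lemma zc_add[intro]: "zc N x \<Longrightarrow> zc N y \<Longrightarrow> zc N (x + y)"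
  unfolding zc_def by (auto simp: distrib_left intro!: bexI[of _ "_ + _"])

lemma zc_uminus[intro]: "zc N x \<Longrightarrow> zc N (- x)"
  unfolding zc_def by (auto intro!: bexI[of _ "- _"])

lemma zc_uminus_iff[simp]: "zc N (- x) \<longleftrightarrow> zc N x"
  using zc_uminus[of N x] zc_uminus[of N "-x"] by auto

lemma zc_diff[intro]: "zc N x \<Longrightarrow> zc N y \<Longrightarrow> zc N (x - y)"
  using zc_add[of N x "-y"] by auto

lemma zc_multL[intro]: "z \<in> Z \<Longrightarrow> zc N x \<Longrightarrow> zc N (z * x)"
  unfolding zc_def by (auto intro!: bexI[of _ "z * _"])

lemma zc_multR[intro]: "z \<in> Z \<Longrightarrow> zc N x \<Longrightarrow> zc N (x * z)"
  using zc_multL[of z N x] by (simp add: mult.commute)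

lemma zc_imp_Z: "zc N x \<Longrightarrow> x \<in> Z"
  unfolding zc_def by auto

lemma zc_int:
  assumes cop: "coprime N m"
  shows "zc N (of_int a) \<longleftrightarrow> int N dvd a"
proof
  assume "zc N (of_int a)"
  then obtain y where y: "y \<in> Z" "of_int a = of_nat N * y" unfolding zc_def by blast
  then obtain b j where "y = of_int b / of_nat m ^ j" unfolding Zinv_iff by blast
  with y have "(of_int a :: rat) = of_nat N * (of_int b / of_nat m ^ j)" by simp
  hence "(of_int (a * int m ^ j) :: rat) = of_int (int N * b)"
    by (simp add: field_simps)
  hence "a * int m ^ j = int N * b" by linarith
  hence "int N dvd a * int m ^ j" by simp
  moreover have "coprime (int N) (int m ^ j)" using cop by simp
  ultimately show "int N dvd a" using coprime_dvd_mult_left_iff by blast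
next
  assume "int N dvd a"
  then obtain b where "a = int N * b" by blast
  thus "zc N (of_int a)" unfolding zc_def by (intro bexI[of _ "of_int b"]) auto
qed

lemma zc_nat:
  assumes cop: "coprime N m"
  shows "zc N (of_nat a) \<longleftrightarrow> N dvd a"
  using zc_int[OF cop, of "int a"] by simp

lemma int_small_dvd:
  fixes c c' :: int
  assumes "0 \<le> c" "c < int N" "0 \<le> c'" "c' < int N" "int N dvd c - c'"
  shows "c = c'"
proof -
  obtain k where k: "c - c' = int N * k" using assms(5) by blast
  have "k = 0"
  proof (rule ccontr)
    assume "k \<noteq> 0"
    hence "k \<ge> 1 \<or> k \<le> -1" by linarith
    thus False
    proof
      assume "k \<ge> 1" hence "int N * k \<ge> int N * 1" by (intro mult_left_mono) auto
      thus False using k assms by linarith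
    next
      assume "k \<le> -1" hence "int N * k \<le> int N * (-1)" by (intro mult_left_mono) auto
      thus False using k assms by linarith
    qed
  qed
  thus ?thesis using k by simp
qed

lemma red_ex1:
  assumes cop: "coprime N m" and N1: "N \<ge> 1" and x: "x \<in> Z"
  shows "\<exists>!c. 0 \<le> c \<and> c < int N \<and> (\<exists>y\<in>Z. x - of_int c = of_nat N * y)"
proof -
  obtain a j where xa: "x = of_int a / of_nat m ^ j" using x unfolding Zinv_iff by blast
  have "coprime (int m ^ j) (int N)" using cop by (simp add: coprime_commute)
  then obtain w where w: "[int m ^ j * w = 1] (mod int N)" using cong_solve_coprime_int by blast
  define c where "c = (a * w) mod int N"
  have c0: "0 \<le> c" "c < int N" using N1 by (auto simp: c_def)
  have "[c * int m ^ j = a * w * int m ^ j] (mod int N)"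
    unfolding c_def by (simp add: cong_def mod_mult_left_eq)
  also have "[a * w * int m ^ j = a * (int m ^ j * w)] (mod int N)" by (simp add: ac_simps)
  also have "[a * (int m ^ j * w) = a * 1] (mod int N)" by (rule cong_mult[OF cong_refl w])
  finally have "[c * int m ^ j = a] (mod int N)" by simp
  hence "int N dvd a - c * int m ^ j" by (simp add: cong_iff_dvd_diff dvd_diff_commute)
  then obtain t where t: "a - c * int m ^ j = int N * t" by blast
  have "x - of_int c = of_nat N * (of_int t / of_nat m ^ j)"
  proof -
    have "x - of_int c = (of_int a - of_int c * of_nat m ^ j) / of_nat m ^ j"
      unfolding xa by (simp add: field_simps)
    also have "of_int a - of_int c * of_nat m ^ j = (of_int (a - c * int m ^ j) :: rat)" by simp
    also have "\<dots> = of_nat N * of_int t" unfolding t by simp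
    finally show ?thesis by simp
  qed
  moreover have "of_int t / of_nat m ^ j \<in> Z" by auto
  ultimately have ex: "0 \<le> c \<and> c < int N \<and> (\<exists>y\<in>Z. x - of_int c = of_nat N * y)"
    using c0 by blast
  have uniq: "c' = c" if c': "0 \<le> c' \<and> c' < int N \<and> (\<exists>y\<in>Z. x - of_int c' = of_nat N * y)" for c'
  proof -
    from c' have "zc N (x - of_int c')" "zc N (x - of_int c)" using ex unfolding zc_def by auto
    hence "zc N ((x - of_int c) - (x - of_int c'))" by blast
    hence "zc N (of_int (c' - c))" by simp
    hence "int N dvd c' - c" using zc_int[OF cop] by blast
    thus "c' = c" using int_small_dvd c' c0 by blast
  qed
  show ?thesis using ex uniq by blast
qed

lemma red_spec:
  assumes cop: "coprime N m" and N1: "N \<ge> 1" and x: "x \<in> Z"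
  shows "0 \<le> red m N x" "red m N x < int N" "zc N (x - of_int (red m N x))"
proof -
  have "0 \<le> red m N x \<and> red m N x < int N \<and> (\<exists>y\<in>Z. x - of_int (red m N x) = of_nat N * y)"
    unfolding red_def by (rule theI'[OF red_ex1[OF assms]])
  thus "0 \<le> red m N x" "red m N x < int N" "zc N (x - of_int (red m N x))"
    unfolding zc_def by auto
qed

lemma red_eq:
  assumes cop: "coprime N m" and N1: "N \<ge> 1" and x: "x \<in> Z" and x': "x' \<in> Z"
  shows "red m N x = red m N x' \<longleftrightarrow> zc N (x - x')"
proof
  assume e: "red m N x = red m N x'"
  have "zc N ((x - of_int (red m N x)) - (x' - of_int (red m N x')))"
    using red_spec[OF cop N1 x] red_spec[OF cop N1 x'] by blast
  thus "zc N (x - x')" using e by simp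
next
  assume z: "zc N (x - x')"
  have "zc N ((x - x') + (x' - of_int (red m N x')))"
    using z red_spec[OF cop N1 x'] by blast
  hence z2: "zc N (x - of_int (red m N x'))" by simp
  have "\<exists>!c. 0 \<le> c \<and> c < int N \<and> (\<exists>y\<in>Z. x - of_int c = of_nat N * y)"
    by (rule red_ex1[OF cop N1 x])
  moreover have "0 \<le> red m N x \<and> red m N x < int N \<and> (\<exists>y\<in>Z. x - of_int (red m N x) = of_nat N * y)"
    using red_spec[OF cop N1 x] unfolding zc_def by auto
  moreover have "0 \<le> red m N x' \<and> red m N x' < int N \<and> (\<exists>y\<in>Z. x - of_int (red m N x') = of_nat N * y)"
    using red_spec[OF cop N1 x'] z2 unfolding zc_def by auto
  ultimately show "red m N x = red m N x'" by blast
qed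

lemma zc_pow:
  assumes "x \<in> Z" "zc N (x - 1)"
  shows "zc N (x ^ s - 1)"
proof (induction s)
  case 0 thus ?case by simp
next
  case (Suc s)
  have "x ^ Suc s - 1 = x * (x ^ s - 1) + (x - 1)" by (simp add: algebra_simps)
  moreover have "zc N (x * (x ^ s - 1) + (x - 1))"
    using zc_add[OF zc_multL[OF assms(1) Suc.IH] assms(2)] .
  ultimately show ?case by (simp only:)
qed

lemma zc_mpow_nat:
  assumes cop: "coprime N m"
  shows "zc N ((of_nat m :: rat) ^ n - 1) \<longleftrightarrow> [m ^ n = 1] (mod N)"
proof -
  have "((of_nat m :: rat) ^ n - 1) = of_int (int m ^ n - 1)" by simp
  hence "zc N ((of_nat m :: rat) ^ n - 1) \<longleftrightarrow> int N dvd int m ^ n - 1"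
    using zc_int[OF cop] by metis
  also have "\<dots> \<longleftrightarrow> [int (m ^ n) = int 1] (mod int N)" by (simp add: cong_iff_dvd_diff)
  also have "\<dots> \<longleftrightarrow> [m ^ n = 1] (mod N)" by (rule cong_int_iff)
  finally show ?thesis .
qed

lemma zc_powi:
  assumes cop: "coprime N m"
  shows "zc N ((of_nat m :: rat) powi k - 1) \<longleftrightarrow> [m ^ nat \<bar>k\<bar> = 1] (mod N)"
proof (cases "k \<ge> 0")
  case True
  hence "(of_nat m :: rat) powi k = of_nat m ^ nat \<bar>k\<bar>"
    by (metis nat_0_le power_int_of_nat abs_of_nonneg)
  thus ?thesis using zc_mpow_nat[OF cop] by simp
next
  case False
  define n where "n = nat \<bar>k\<bar>"
  have k: "k = - int n" using False n_def by simp
  have pk: "(of_nat m :: rat) powi k = 1 / of_nat m ^ n"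
    unfolding k by (simp add: power_int_minus_divide)
  have "zc N ((of_nat m :: rat) powi k - 1) \<longleftrightarrow> zc N ((of_nat m :: rat) ^ n - 1)"
  proof
    assume z: "zc N ((of_nat m :: rat) powi k - 1)"
    have eq: "(of_nat m :: rat) ^ n - 1 = - ((of_nat m ^ n) * ((of_nat m :: rat) powi k - 1))"
      unfolding pk by (simp add: field_simps)
    show "zc N ((of_nat m :: rat) ^ n - 1)" unfolding eq
      by (intro zc_uminus zc_multL) (auto simp: z)
  next
    assume z: "zc N ((of_nat m :: rat) ^ n - 1)"
    have eq: "(of_nat m :: rat) powi k - 1 = - ((1 / of_nat m ^ n) * ((of_nat m :: rat) ^ n - 1))"
      unfolding pk by (simp add: field_simps)
    have "(1 / (of_nat m :: rat) ^ n) \<in> Z" using Zinv_divpow[OF Zinv_1] by simp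
    show "zc N ((of_nat m :: rat) powi k - 1)" unfolding eq
      by (intro zc_uminus zc_multL) fact+
  qed
  thus ?thesis using zc_mpow_nat[OF cop] n_def by simp
qed

lemma zc_powi_ord:
  assumes cop: "coprime N m"
  shows "zc N ((of_nat m :: rat) powi k - 1) \<longleftrightarrow> int (ord N m) dvd k"
proof -
  have "zc N ((of_nat m :: rat) powi k - 1) \<longleftrightarrow> ord N m dvd nat \<bar>k\<bar>"
    using zc_powi[OF cop] ord_divides by simp
  also have "\<dots> \<longleftrightarrow> int (ord N m) dvd k"
    by (metis dvd_abs_iff int_dvd_int_iff abs_ge_zero nat_0_le)
  finally show ?thesis .
qed

end

context gm
begin

definition HH :: "nat \<Rightarrow> nat \<Rightarrow> (int \<times> rat) set" where
  "HH N L = {(j, r). r \<in> Z \<and> int L dvd j \<and> zc N r}"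

lemma HH_mem[simp]: "(j, r) \<in> HH N L \<longleftrightarrow> r \<in> Z \<and> int L dvd j \<and> zc N r"
  by (simp add: HH_def)

lemma HH_sub: "HH N L \<subseteq> carrier G" by (auto simp: HH_def)

lemma zc_powi_L:
  assumes cop: "coprime N m" and oL: "ord N m dvd L" and j: "int L dvd j"
  shows "zc N ((of_nat m :: rat) powi j - 1)"
proof -
  have "int (ord N m) dvd int L" using oL by simp
  hence "int (ord N m) dvd j" using j dvd_trans by blast
  thus ?thesis using zc_powi_ord[OF cop] by blast
qed

lemma powi_cancel: "(of_nat m :: rat) powi k * of_nat m powi (- k) = 1"
  by (simp add: power_int_minus)

lemma powi_cancel2: "(of_nat m :: rat) powi (a + j) * of_nat m powi (- a) = of_nat m powi j"
  by (simp add: power_int_add[symmetric])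

lemma powi_cancel3: "(of_nat m :: rat) powi (- a) * of_nat m powi (a + j) = of_nat m powi j"
  using powi_cancel2 by (simp add: mult.commute)

lemma HH_subgroup:
  assumes cop: "coprime N m" and oL: "ord N m dvd L"
  shows "subgroup (HH N L) G"
proof (rule group.subgroupI[OF group_G])
  show "HH N L \<subseteq> carrier G" by (rule HH_sub)
  have "(0, 0) \<in> HH N L" by simp
  thus "HH N L \<noteq> {}" by blast
next
  fix a assume a: "a \<in> HH N L"
  obtain j r where jr: "a = (j, r)" by (cases a)
  have h: "r \<in> Z" "int L dvd j" "zc N r" using a jr by auto
  have "inv\<^bsub>G\<^esub> a = (-j, - (of_nat m powi (-j)) * r)" unfolding jr using h(1) by (rule Gm_inv)
  moreover have "zc N (- (of_nat m powi (-j)) * r)" using zc_multL[OF Zinv_uminus[OF Zinv_powi] h(3)] .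
  moreover have "- (of_nat m powi (-j)) * r \<in> Z" using zc_imp_Z[OF calculation(2)] .
  ultimately show "inv\<^bsub>G\<^esub> a \<in> HH N L" using h(2) by simp
next
  fix a b assume a: "a \<in> HH N L" and b: "b \<in> HH N L"
  obtain j r where jr: "a = (j, r)" by (cases a)
  obtain l s where ls: "b = (l, s)" by (cases b)
  have h: "r \<in> Z" "int L dvd j" "zc N r" "s \<in> Z" "int L dvd l" "zc N s" using a b jr ls by auto
  have "zc N (of_nat m powi j * s + r)" using zc_add[OF zc_multL[OF Zinv_powi h(6)] h(3)] .
  moreover have "of_nat m powi j * s + r \<in> Z" using zc_imp_Z[OF calculation] .
  moreover have "int L dvd j + l" using h by simp
  ultimately show "a \<otimes>\<^bsub>G\<^esub> b \<in> HH N L" unfolding jr ls by simp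
qed

lemma HH_normal:
  assumes cop: "coprime N m" and oL: "ord N m dvd L"
  shows "HH N L \<lhd> G"
proof (rule group.normal_invI[OF group_G HH_subgroup[OF assms]])
  fix x h assume x: "x \<in> carrier G" and h: "h \<in> HH N L"
  obtain a b where ab: "x = (a, b)" by (cases x)
  obtain j r where jr: "h = (j, r)" by (cases h)
  have hb: "b \<in> Z" using x ab by auto
  have hr: "r \<in> Z" "int L dvd j" "zc N r" using h jr by auto
  have eq: "x \<otimes>\<^bsub>G\<^esub> h \<otimes>\<^bsub>G\<^esub> inv\<^bsub>G\<^esub> x
      = (j, of_nat m powi a * r - b * (of_nat m powi j - 1))"
    using hb unfolding ab jr
    by (simp add: algebra_simps powi_cancel2 powi_cancel3)
  have z: "zc N (of_nat m powi a * r - b * (of_nat m powi j - 1))"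
    by (rule zc_diff[OF zc_multL[OF Zinv_powi hr(3)] zc_multL[OF hb zc_powi_L[OF cop oL hr(2)]]])
  have "of_nat m powi a * r - b * (of_nat m powi j - 1) \<in> Z"
    using hr hb by (intro Zinv_diff Zinv_mult) auto
  thus "x \<otimes>\<^bsub>G\<^esub> h \<otimes>\<^bsub>G\<^esub> inv\<^bsub>G\<^esub> x \<in> HH N L"
    unfolding eq using z hr by simp
qed

lemma Gm_cong_eq:
  assumes cop: "coprime N m" and N1: "N \<ge> 1"
  shows "Gm_cong m N = HH N (ord N m)"
proof safe
  fix k r assume "(k, r) \<in> Gm_cong m N"
  hence r: "r \<in> Z" and e1: "red m N (of_nat m powi k) = red m N 1"
    and e2: "red m N r = red m N 0" unfolding Gm_cong_def by simp_all
  have "zc N (of_nat m powi k - 1)" using e1 red_eq[OF cop N1 Zinv_powi Zinv_1] by simp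
  hence "int (ord N m) dvd k" using zc_powi_ord[OF cop] by blast
  moreover have "zc N r" using e2 red_eq[OF cop N1 r Zinv_0] by simp
  ultimately show "(k, r) \<in> HH N (ord N m)" using r by simp
next
  fix k r assume "(k, r) \<in> HH N (ord N m)"
  hence r: "r \<in> Z" "int (ord N m) dvd k" "zc N r" by auto
  have "red m N (of_nat m powi k) = red m N 1"
    using red_eq[OF cop N1 Zinv_powi Zinv_1] zc_powi_ord[OF cop] r(2) by simp
  moreover have "red m N r = red m N 0" using red_eq[OF cop N1 r(1) Zinv_0] r(3) by simp
  ultimately show "(k, r) \<in> Gm_cong m N" using r(1) unfolding Gm_cong_def by simp
qed

lemma HH_mono:
  assumes "N' dvd N" "L' dvd L"
  shows "HH N L \<subseteq> HH N' L'"
proof safe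
  fix j r assume "(j, r) \<in> HH N L"
  hence r: "r \<in> Z" "int L dvd j" "zc N r" by auto
  obtain c where c: "N = N' * c" using assms(1) by blast
  obtain y where y: "y \<in> Z" "r = of_nat N * y" using r(3) unfolding zc_def by blast
  have "r = of_nat N' * (of_nat c * y)" using y c by simp
  hence "zc N' r" unfolding zc_def using y by (auto intro!: bexI[of _ "of_nat c * y"])
  moreover have "int L' dvd j" using assms(2) r(2) by (meson dvd_trans int_dvd_int_iff)
  ultimately show "(j, r) \<in> HH N' L'" using r(1) by (simp only: HH_mem)
qed

end

context gm
begin

definition ev :: "(int \<times> rat) list \<Rightarrow> int \<times> rat" where
  "ev ws = foldr (monoid.mult G) ws (monoid.one G)"

abbreviation "SS \<equiv> {genA, genT} \<union> m_inv G ` {genA, genT}"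

lemma genA_c[simp]: "genA \<in> carrier G" by (simp add: genA_def)
lemma genT_c[simp]: "genT \<in> carrier G" by (simp add: genT_def)
lemma inv_genA: "inv\<^bsub>G\<^esub> genA = (0, -1)" by (simp add: genA_def)
lemma inv_genT: "inv\<^bsub>G\<^esub> genT = (-1, 0)" by (simp add: genT_def)
lemma SS_eq: "SS = {(0,1), (1,0), (0,-1), (-1,0)}"
  using inv_genA inv_genT by (auto simp: genA_def genT_def)

lemma ev_Nil[simp]: "ev [] = (0, 0)" by (simp add: ev_def)
lemma ev_Cons[simp]: "ev (x # ws) = x \<otimes>\<^bsub>G\<^esub> ev ws" by (simp add: ev_def)

lemma ev_carrier: "set ws \<subseteq> carrier G \<Longrightarrow> ev ws \<in> carrier G"
proof (induction ws)
  case Nil thus ?case by simp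
next
  case (Cons x ws) thus ?case using group.is_monoid[OF group_G]
    by (simp add: monoid.m_closed)
qed

lemma ev_append:
  assumes "set ws \<subseteq> carrier G" "set vs \<subseteq> carrier G"
  shows "ev (ws @ vs) = ev ws \<otimes>\<^bsub>G\<^esub> ev vs"
  using assms
proof (induction ws)
  case Nil
  thus ?case using ev_carrier[OF Nil(2)] group.is_monoid[OF group_G]
    by (metis Gm_one append_Nil ev_Nil monoid.l_one)
next
  case (Cons x ws)
  have "x \<in> carrier G" "set ws \<subseteq> carrier G" using Cons.prems by auto
  thus ?case using Cons ev_carrier[OF Cons(3)] ev_carrier[of ws] group.is_monoid[OF group_G]
    by (simp add: monoid.m_assoc)
qed

lemma ev_repA: "ev (replicate n genA) = (0, of_nat n)"
  by (induction n) (auto simp: genA_def)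

lemma ev_repT: "ev (replicate n genT) = (int n, 0)"
  by (induction n) (auto simp: genT_def)

lemma ev_repTi: "ev (replicate n (-1, 0)) = (- int n, 0)"
  by (induction n) auto

fun digitword :: "nat \<Rightarrow> nat \<Rightarrow> (int \<times> rat) list" where
  "digitword 0 i = []"
| "digitword (Suc n) i = replicate (i mod m) genA @ genT # digitword n (i div m)"

lemma digitword_set: "set (digitword n i) \<subseteq> {genA, genT}"
  by (induction n arbitrary: i) auto

lemma digitword_len: "length (digitword n i) \<le> n * m"
proof (induction n arbitrary: i)
  case 0 thus ?case by simp
next
  case (Suc n)
  have "i mod m < m" using m2 by simp
  thus ?case using Suc[of "i div m"] by simp
qed

lemma digitword_ev: "ev (digitword n i) = (int n, of_nat (i mod m ^ n))"
proof (induction n arbitrary: i)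
  case 0 thus ?case by simp
next
  case (Suc n)
  have sc: "set (replicate (i mod m) genA) \<subseteq> carrier G" "set (genT # digitword n (i div m)) \<subseteq> carrier G"
    using digitword_set[of n "i div m"] by auto
  have "ev (digitword (Suc n) i) = (0, of_nat (i mod m)) \<otimes>\<^bsub>G\<^esub> ((1, 0) \<otimes>\<^bsub>G\<^esub> (int n, of_nat (i div m mod m ^ n)))"
    using ev_append[OF sc] by (simp add: ev_repA Suc genT_def)
  also have "\<dots> = (int (Suc n), of_nat m * of_nat (i div m mod m ^ n) + of_nat (i mod m))"
    by simp
  also have "(of_nat m * of_nat (i div m mod m ^ n) + of_nat (i mod m) :: rat) = of_nat (i mod m ^ Suc n)"
    by (metis mod_mult2_eq of_nat_add of_nat_mult power_Suc)
  finally show ?case .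
qed

definition word :: "nat \<Rightarrow> nat \<Rightarrow> nat \<Rightarrow> (int \<times> rat) list" where
  "word n j i = digitword n i @ replicate n (-1, 0) @ replicate j genT"

lemma word_set: "set (word n j i) \<subseteq> SS"
  using digitword_set[of n i] inv_genT by (auto simp: word_def)

lemma SS_carrier: "SS \<subseteq> carrier G"
  using group.inv_closed[OF group_G] by auto

lemma word_len: "length (word n j i) \<le> n * m + n + j"
  using digitword_len[of n i] by (simp add: word_def)

lemma word_ev:
  assumes "i < m ^ n"
  shows "ev (word n j i) = (int j, of_nat i)"
proof -
  have c1: "set (digitword n i) \<subseteq> carrier G" using digitword_set[of n i] by auto
  have c2: "set (replicate n ((-1, 0) :: int \<times> rat)) \<subseteq> carrier G" by auto
  have c3: "set (replicate j genT) \<subseteq> carrier G" by auto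
  have "ev (word n j i) = ev (digitword n i) \<otimes>\<^bsub>G\<^esub> (ev (replicate n (-1, 0)) \<otimes>\<^bsub>G\<^esub> ev (replicate j genT))"
    unfolding word_def using ev_append[OF c2 c3] ev_append[OF c1, of "replicate n (-1,0) @ replicate j genT"] c2 c3
    by simp
  also have "\<dots> = (int j, of_nat i)"
    using assms by (simp add: digitword_ev ev_repT ev_repTi)
  finally show ?thesis .
qed

lemma prod_inv:
  assumes "y \<in> Z"
  shows "(a, x) \<otimes>\<^bsub>G\<^esub> inv\<^bsub>G\<^esub> (b, y) = (a - b, x - of_nat m powi (a - b) * y)"
proof -
  have "(of_nat m :: rat) powi a * of_nat m powi (- b) = of_nat m powi (a - b)"
    by (simp add: power_int_add[symmetric])
  thus ?thesis using assms by (simp add: algebra_simps)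
qed

lemma ev_fst_bound:
  assumes "set ws \<subseteq> SS"
  shows "\<bar>fst (ev ws)\<bar> \<le> int (length ws)"
  using assms
proof (induction ws)
  case Nil thus ?case by simp
next
  case (Cons x ws)
  have x: "x \<in> {(0,1), (1,0), (0,-1), (-1,0)}" using Cons.prems SS_eq by auto
  obtain a b where ab: "ev ws = (a, b)" by (cases "ev ws")
  have "\<bar>a\<bar> \<le> int (length ws)" using Cons ab by simp
  thus ?case using x ab by auto
qed

end

locale hh = gm +
  fixes N L :: nat
  assumes cop: "coprime N m" and N1: "N \<ge> 1" and L1: "L \<ge> 1" and oL: "ord N m dvd L"
begin

abbreviation "H \<equiv> HH N L"

lemma H_normal: "H \<lhd> G" by (rule HH_normal[OF cop oL])
lemma H_subgroup: "subgroup H G" by (rule HH_subgroup[OF cop oL])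

lemma rc_eq:
  assumes x: "x \<in> carrier G" and y: "y \<in> carrier G"
  shows "H #>\<^bsub>G\<^esub> x = H #>\<^bsub>G\<^esub> y \<longleftrightarrow> x \<otimes>\<^bsub>G\<^esub> inv\<^bsub>G\<^esub> y \<in> H"
proof
  assume e: "H #>\<^bsub>G\<^esub> x = H #>\<^bsub>G\<^esub> y"
  have "x \<in> H #>\<^bsub>G\<^esub> y" using group.rcos_self[OF group_G x H_subgroup] e by simp
  thus "x \<otimes>\<^bsub>G\<^esub> inv\<^bsub>G\<^esub> y \<in> H"
    using subgroup.rcos_module_imp[OF H_subgroup group_G y] by blast
next
  assume "x \<otimes>\<^bsub>G\<^esub> inv\<^bsub>G\<^esub> y \<in> H"
  hence "x \<in> H #>\<^bsub>G\<^esub> y" using subgroup.rcos_module_rev[OF H_subgroup group_G y x] by blast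
  thus "H #>\<^bsub>G\<^esub> x = H #>\<^bsub>G\<^esub> y"
    using group.repr_independence[OF group_G _ y H_subgroup] by metis
qed

lemma reduce:
  assumes g: "g \<in> carrier G"
  shows "\<exists>j i. j < L \<and> i < N \<and> (int j, of_nat i) \<otimes>\<^bsub>G\<^esub> inv\<^bsub>G\<^esub> g \<in> H"
proof -
  obtain k r where kr: "g = (k, r)" by (cases g)
  have r: "r \<in> Z" using g kr by simp
  define j where "j = nat (k mod int L)"
  define i where "i = nat (red m N r)"
  have km: "0 \<le> k mod int L" "k mod int L < int L" using L1 by simp_all
  hence jL: "j < L" and j': "int j = k mod int L" unfolding j_def by linarith+
  have rs: "0 \<le> red m N r" "red m N r < int N" "zc N (r - of_int (red m N r))"
    using red_spec[OF cop N1 r] by auto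
  have iN: "i < N" and i': "of_nat i = (of_int (red m N r) :: rat)" using rs by (auto simp: i_def)
  have "int j - k = int L * (- (k div int L))"
    unfolding j' using div_mult_mod_eq[of k "int L"] by (simp add: algebra_simps)
  hence dv: "int L dvd int j - k" by (metis dvd_triv_left)
  have prod: "(int j, of_nat i) \<otimes>\<^bsub>G\<^esub> inv\<^bsub>G\<^esub> g
      = (int j - k, - (r - of_nat i) - r * (of_nat m powi (int j - k) - 1))"
    using r unfolding kr prod_inv[OF r] by (simp add: algebra_simps)
  have "zc N (- (r - of_nat i) - r * (of_nat m powi (int j - k) - 1))"
    using zc_diff[OF zc_uminus[OF rs(3)[folded i']] zc_multL[OF r zc_powi_L[OF cop oL dv]]] .
  moreover have "- (r - of_nat i) - r * (of_nat m powi (int j - k) - 1) \<in> Z"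
    using zc_imp_Z[OF calculation] .
  ultimately have "(int j, of_nat i) \<otimes>\<^bsub>G\<^esub> inv\<^bsub>G\<^esub> g \<in> H" unfolding prod using dv by simp
  thus ?thesis using jL iN by blast
qed

lemma rcosets_eq:
  "RCOSETS G H = (\<lambda>(j, i). H #>\<^bsub>G\<^esub> (int j, of_nat i)) ` ({..<L} \<times> {..<N})"
proof safe
  fix c assume "c \<in> RCOSETS G H"
  then obtain g where g: "g \<in> carrier G" "c = H #>\<^bsub>G\<^esub> g" unfolding RCOSETS_def by blast
  obtain j i where ji: "j < L" "i < N" "(int j, of_nat i) \<otimes>\<^bsub>G\<^esub> inv\<^bsub>G\<^esub> g \<in> H"
    using reduce[OF g(1)] by blast
  have "H #>\<^bsub>G\<^esub> (int j, of_nat i) = H #>\<^bsub>G\<^esub> g" using rc_eq[OF _ g(1)] ji by simp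
  thus "c \<in> (\<lambda>(j, i). H #>\<^bsub>G\<^esub> (int j, of_nat i)) ` ({..<L} \<times> {..<N})"
    using g ji by force
next
  fix j i assume "j < L" "i < N"
  show "H #>\<^bsub>G\<^esub> (int j, of_nat i) \<in> RCOSETS G H"
    using group.rcosetsI[OF group_G HH_sub] by simp
qed

lemma rcosets_inj: "inj_on (\<lambda>(j, i). H #>\<^bsub>G\<^esub> (int j, of_nat i)) ({..<L} \<times> {..<N})"
proof (rule inj_onI, clarify)
  fix j i j' i' assume a: "j < L" "i < N" "j' < L" "i' < N"
    and e: "H #>\<^bsub>G\<^esub> (int j, of_nat i) = H #>\<^bsub>G\<^esub> (int j', of_nat i')"
  have "(int j, of_nat i) \<otimes>\<^bsub>G\<^esub> inv\<^bsub>G\<^esub> (int j', of_nat i') \<in> H"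
    using rc_eq e by simp
  hence h: "int L dvd int j - int j'" "zc N (of_nat i - of_nat m powi (int j - int j') * of_nat i')"
    by (simp_all only: prod_inv[OF Zinv_nat] HH_mem)
  have "int j = int j'" using int_small_dvd[of "int j" L "int j'"] h(1) a by simp
  hence jj: "j = j'" by simp
  hence "zc N (of_int (int i - int i'))" using h(2) by simp
  hence "int N dvd int i - int i'" using zc_int[OF cop] by blast
  hence "int i = int i'" using int_small_dvd[of "int i" N "int i'"] a by simp
  thus "j = j' \<and> i = i'" using jj by simp
qed

lemma card_rcosets: "card (RCOSETS G H) = L * N"
  unfolding rcosets_eq using card_image[OF rcosets_inj] by simp

lemma finite_rcosets: "finite (RCOSETS G H)"
  unfolding rcosets_eq by simp

lemma word_exists:
  assumes c: "c \<in> RCOSETS G H" and d: "d \<in> RCOSETS G H" and n: "N \<le> m ^ n"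
  shows "\<exists>ws. length ws \<le> L + n * m + n \<and> set ws \<subseteq> SS \<and> r_coset G c (ev ws) = d"
proof -
  obtain x where x: "x \<in> carrier G" "c = H #>\<^bsub>G\<^esub> x" using c unfolding RCOSETS_def by blast
  obtain y where y: "y \<in> carrier G" "d = H #>\<^bsub>G\<^esub> y" using d unfolding RCOSETS_def by blast
  interpret grp: group G by (rule group_G)
  define g where "g = inv\<^bsub>G\<^esub> x \<otimes>\<^bsub>G\<^esub> y"
  have g: "g \<in> carrier G" using x y by (simp add: g_def)
  obtain j i where ji: "j < L" "i < N" "(int j, of_nat i) \<otimes>\<^bsub>G\<^esub> inv\<^bsub>G\<^esub> g \<in> H"
    using reduce[OF g] by blast
  define ws where "ws = word n j i"
  have im: "i < m ^ n" using ji n by simp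
  have w: "ev ws = (int j, of_nat i)" unfolding ws_def using word_ev[OF im] .
  have wc: "ev ws \<in> carrier G" unfolding w by simp
  have len: "length ws \<le> L + n * m + n" using word_len[of n j i] ji unfolding ws_def by simp
  have "x \<otimes>\<^bsub>G\<^esub> (ev ws \<otimes>\<^bsub>G\<^esub> inv\<^bsub>G\<^esub> g) \<otimes>\<^bsub>G\<^esub> inv\<^bsub>G\<^esub> x \<in> H"
    using normal.inv_op_closed2[OF H_normal x(1)] ji(3) w by simp
  also have "x \<otimes>\<^bsub>G\<^esub> (ev ws \<otimes>\<^bsub>G\<^esub> inv\<^bsub>G\<^esub> g) \<otimes>\<^bsub>G\<^esub> inv\<^bsub>G\<^esub> x = (x \<otimes>\<^bsub>G\<^esub> ev ws) \<otimes>\<^bsub>G\<^esub> inv\<^bsub>G\<^esub> y"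
    using x y wc unfolding g_def by (simp add: grp.inv_mult_group grp.m_assoc)
  finally have "H #>\<^bsub>G\<^esub> (x \<otimes>\<^bsub>G\<^esub> ev ws) = H #>\<^bsub>G\<^esub> y"
    using rc_eq x y wc by simp
  hence "r_coset G c (ev ws) = d"
    using x y wc grp.coset_mult_assoc[OF HH_sub x(1) wc] by simp
  moreover have "set ws \<subseteq> SS" unfolding ws_def by (rule word_set)
  ultimately show ?thesis using len by blast
qed

lemma N_le_pow: "N \<le> m ^ N"
proof -
  have "N < 2 ^ N" by (rule less_exp)
  also have "\<dots> \<le> m ^ N" using m2 by (simp add: power_mono)
  finally show ?thesis by simp
qed

lemma cay_dist_le:
  assumes c: "c \<in> RCOSETS G H" and d: "d \<in> RCOSETS G H" and n: "N \<le> m ^ n"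
  shows "cay_dist G {genA, genT} H c d \<le> L + n * m + n"
proof -
  obtain ws where ws: "length ws \<le> L + n * m + n" "set ws \<subseteq> SS" "r_coset G c (ev ws) = d"
    using word_exists[OF assms] by blast
  have "cay_dist G {genA, genT} H c d \<le> length ws"
    unfolding cay_dist_def by (rule Least_le) (use ws in \<open>auto simp: ev_def\<close>)
  thus ?thesis using ws by simp
qed

lemma dist_set_finite: "finite {cay_dist G {genA, genT} H c d | c d. c \<in> RCOSETS G H \<and> d \<in> RCOSETS G H}"
proof -
  have "{cay_dist G {genA, genT} H c d | c d. c \<in> RCOSETS G H \<and> d \<in> RCOSETS G H}
      = (\<lambda>(c, d). cay_dist G {genA, genT} H c d) ` (RCOSETS G H \<times> RCOSETS G H)" by auto
  thus ?thesis using finite_rcosets by simp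
qed

lemma H_in_rcosets: "H \<in> RCOSETS G H"
  using group.rcosetsI[OF group_G HH_sub, of "\<one>\<^bsub>G\<^esub>"] group.coset_mult_one[OF group_G HH_sub]
  by simp

lemma diam_le:
  assumes n: "N \<le> m ^ n"
  shows "cay_diam G {genA, genT} H \<le> L + n * m + n"
  unfolding cay_diam_def
  using dist_set_finite cay_dist_le[OF _ _ n] H_in_rcosets
  by (subst Max_le_iff) auto

lemma half_bound:
  fixes t :: int
  assumes "int L dvd t - int (L div 2)"
  shows "\<bar>t\<bar> \<ge> int (L div 2)"
proof -
  obtain k where k: "t - int (L div 2) = int L * k" using assms by blast
  have h2: "2 * int (L div 2) \<le> int L" by linarith
  show ?thesis
  proof (cases "k \<ge> 0")
    case True hence "int L * k \<ge> 0" by simp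
    thus ?thesis using k by linarith
  next
    case False hence "k \<le> -1" by simp
    hence "int L * k \<le> int L * (-1)" by (intro mult_left_mono) auto
    thus ?thesis using k h2 by linarith
  qed
qed

lemma diam_ge: "cay_diam G {genA, genT} H \<ge> L div 2"
proof -
  define d where "d = H #>\<^bsub>G\<^esub> (int (L div 2), 0)"
  have d: "d \<in> RCOSETS G H" unfolding d_def using group.rcosetsI[OF group_G HH_sub] by simp
  define P where "P = (\<lambda>n. \<exists>ws. length ws = n \<and> set ws \<subseteq> {genA, genT} \<union> m_inv G ` {genA, genT} \<and>
                    r_coset G H (foldr (monoid.mult G) ws (monoid.one G)) = d)"
  obtain ws0 where ws0: "set ws0 \<subseteq> SS" "r_coset G H (ev ws0) = d"
    using word_exists[OF H_in_rcosets d N_le_pow] by blast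
  have "P (length ws0)" unfolding P_def using ws0 by (auto simp: ev_def)
  hence "P (Least P)" by (rule LeastI)
  then obtain ws where ws: "length ws = Least P" "set ws \<subseteq> SS" "r_coset G H (ev ws) = d"
    unfolding P_def ev_def by blast
  have wc: "ev ws \<in> carrier G" using ev_carrier ws(2) SS_carrier by blast
  have "H #>\<^bsub>G\<^esub> ev ws = H #>\<^bsub>G\<^esub> (int (L div 2), 0)" using ws(3) d_def by simp
  hence "ev ws \<otimes>\<^bsub>G\<^esub> inv\<^bsub>G\<^esub> (int (L div 2), 0) \<in> H" using rc_eq[OF wc] by simp
  moreover obtain a b where ab: "ev ws = (a, b)" by (cases "ev ws")
  ultimately have "int L dvd a - int (L div 2)" by simp
  hence "\<bar>a\<bar> \<ge> int (L div 2)" by (rule half_bound)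
  moreover have "\<bar>a\<bar> \<le> int (length ws)" using ev_fst_bound[OF ws(2)] ab by simp
  ultimately have "L div 2 \<le> Least P" using ws(1) by simp
  hence "L div 2 \<le> cay_dist G {genA, genT} H H d" unfolding cay_dist_def P_def by simp
  also have "\<dots> \<le> cay_diam G {genA, genT} H"
    unfolding cay_diam_def using dist_set_finite H_in_rcosets d by (intro Max_ge) auto
  finally show ?thesis .
qed

end

lemma gauss2: "2 * (\<Sum>i<n. int i) = int n * (int n - 1)"
  by (induction n) (auto simp: algebra_simps)

lemma pow_cong_lin:
  fixes a :: int
  shows "[(1 + a) ^ i = 1 + int i * a] (mod a^2)"
proof (induction i)
  case 0 thus ?case by simp
next
  case (Suc i)
  have "(1 + a) ^ Suc i = (1 + a) * (1 + a) ^ i" by simp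
  have "[(1 + a) * (1 + a) ^ i = (1 + a) * (1 + int i * a)] (mod a^2)"
    by (rule cong_mult[OF cong_refl Suc])
  moreover have "(1 + a) * (1 + int i * a) = (1 + int (Suc i) * a) + a^2 * int i"
    by (simp add: algebra_simps power2_eq_square)
  moreover have "[(1 + int (Suc i) * a) + a^2 * int i = 1 + int (Suc i) * a] (mod a^2)"
    by (simp add: cong_def)
  ultimately show ?case by (metis power_Suc cong_trans)
qed

lemma geo_cong:
  fixes x a :: int
  assumes "[x = 1] (mod a)"
  shows "[(\<Sum>i<e. x ^ i) = int e] (mod a)"
proof -
  have "[(\<Sum>i<e. x ^ i) = (\<Sum>i<e. 1)] (mod a)"
    by (rule cong_sum) (use cong_pow[OF assms] in auto)
  thus ?thesis by simp
qed

lemma exact_step: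
  fixes x b :: int and q :: nat
  assumes xb: "x - 1 = int q * b" and hq: "int q dvd (\<Sum>i<q. int i)^2"
  shows "\<exists>v. (\<Sum>i<q. x^i) = int q * v \<and> coprime v (int q)"
proof -
  define a where "a = int q * b"
  define T where "T = (\<Sum>i<q. int i)"
  have x: "x = 1 + a" using xb a_def by simp
  have "[(\<Sum>i<q. x^i) = (\<Sum>i<q. 1 + int i * a)] (mod a^2)"
    unfolding x by (rule cong_sum) (rule pow_cong_lin)
  moreover have "(\<Sum>i<q. 1 + int i * a) = int q + a * T"
    by (simp add: T_def sum.distrib sum_distrib_left mult.commute)
  ultimately have "[(\<Sum>i<q. x^i) = int q + a * T] (mod a^2)" by simp
  then obtain k where k: "int q + a * T = (\<Sum>i<q. x^i) + a^2 * k"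
    using cong_iff_lin by blast
  define t where "t = - k"
  have t: "(\<Sum>i<q. x^i) = int q + a * T + a^2 * t" using k unfolding t_def by simp
  define v where "v = 1 + b * T + int q * b^2 * t"
  have S: "(\<Sum>i<q. x^i) = int q * v" unfolding t v_def a_def by (simp add: algebra_simps power2_eq_square)
  have "coprime v (int q)"
  proof (rule coprimeI)
    fix c assume cv: "c dvd v" and cq: "c dvd int q"
    have e1: "1 = v * (1 - b * T) + b^2 * T^2 - int q * (b^2 * t * (1 - b * T))"
      unfolding v_def by (simp add: algebra_simps power2_eq_square)
    have d1: "c dvd v * (1 - b * T)" using cv by simp
    have d2: "c dvd int q * (b^2 * t * (1 - b * T))" using cq by simp
    have "c dvd T^2" using cq hq unfolding T_def by (rule dvd_trans)
    hence d3: "c dvd b^2 * T^2" by simp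
    have "c dvd v * (1 - b * T) + b^2 * T^2 - int q * (b^2 * t * (1 - b * T))"
      by (intro dvd_diff dvd_add d1 d2 d3)
    hence "c dvd 1" using e1 by simp
    thus "is_unit c" by simp
  qed
  thus ?thesis using S by blast
qed

context gm
begin

definition qq :: nat where "qq = m^2 - 1"

lemma qq3: "qq \<ge> 3"
proof -
  have "m * m \<ge> 2 * 2" using m2 mult_le_mono by blast
  thus ?thesis unfolding qq_def by (simp add: power2_eq_square)
qed

lemma qq_int: "int qq = int m ^ 2 - 1"
  unfolding qq_def using m2 by (simp add: of_nat_diff)

lemma qq_T: "int qq dvd (\<Sum>i<qq. int i)^2"
proof (cases "even m")
  case True
  hence "odd (m^2 - 1)" using m2 by simp
  hence oq: "odd qq" unfolding qq_def .
  then obtain c where c: "qq = 2 * c + 1" using oddE by blast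
  have "2 * (\<Sum>i<qq. int i) = 2 * (int qq * int c)" using gauss2[of qq] c by simp
  hence "(\<Sum>i<qq. int i) = int qq * int c" by simp
  thus ?thesis by (simp add: power2_eq_square)
next
  case False
  then obtain k where k: "m = 2 * k + 1" using oddE by blast
  have "qq = m^2 - 1" by (simp add: qq_def)
  also have "\<dots> = 4 * (k * (k + 1))" unfolding k by (simp add: power2_eq_square algebra_simps)
  finally have "qq = 4 * (k * (k + 1))" .
  then obtain c where c: "qq = 4 * c" by blast
  have "2 * (\<Sum>i<qq. int i) = 2 * (2 * int c * (int qq - 1))" using gauss2[of qq] c by simp
  hence sT: "(\<Sum>i<qq. int i) = 2 * int c * (int qq - 1)" by simp
  have "(2 * int c * (int qq - 1))^2 = int qq * (int c * (int qq - 1)^2)"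
    using c by (simp add: power2_eq_square algebra_simps)
  thus ?thesis unfolding sT by simp
qed

lemma exactE: "k \<ge> 1 \<Longrightarrow> \<exists>u. int m ^ (2 * qq^(k-1)) - 1 = int qq ^ k * u \<and> coprime u (int qq)"
proof (induction k rule: dec_induct)
  case base
  show ?case using qq_int by (intro exI[of _ 1]) simp
next
  case (step k)
  then obtain u where u: "int m ^ (2 * qq^(k-1)) - 1 = int qq ^ k * u" "coprime u (int qq)" by blast
  define x where "x = int m ^ (2 * qq^(k-1))"
  have "x - 1 = int qq * (int qq ^ (k - 1) * u)"
    using u(1) step(1) unfolding x_def by (metis mult.assoc power_eq_if not_one_le_zero)
  then obtain v where v: "(\<Sum>i<qq. x^i) = int qq * v" "coprime v (int qq)"
    using exact_step qq_T by blast
  have e: "2 * qq^(Suc k - 1) = 2 * qq^(k-1) * qq" using step(1) by (cases k) auto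
  have "int m ^ (2 * qq^(Suc k - 1)) = x ^ qq"
    unfolding x_def by (simp only: e power_mult)
  moreover have "x ^ qq - 1 = (x - 1) * (\<Sum>i<qq. x^i)" by (rule power_diff_1_eq)
  ultimately have "int m ^ (2 * qq^(Suc k - 1)) - 1 = (x - 1) * (\<Sum>i<qq. x^i)" by simp
  also have "\<dots> = int qq ^ k * u * (int qq * v)" using u(1) v(1) unfolding x_def by simp
  also have "\<dots> = int qq ^ Suc k * (u * v)" by (simp add: algebra_simps)
  finally have 1: "int m ^ (2 * qq^(Suc k - 1)) - 1 = int qq ^ Suc k * (u * v)" .
  have 2: "coprime (u * v) (int qq)" using u(2) v(2) by simp
  show ?case by (rule exI[of _ "u * v"]) (use 1 2 in simp)
qed

end

lemma AN:
  fixes x :: "nat \<Rightarrow> real"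
  assumes ab: "\<beta> < \<alpha>" "0 \<le> \<beta>" and C: "C > 0" and c: "c \<ge> 0"
    and x1: "\<And>k. k \<ge> 1 \<Longrightarrow> x k \<ge> 1"
    and unb: "\<And>B. \<exists>k\<ge>1. x k > B"
    and bnd: "\<And>k. k \<ge> 1 \<Longrightarrow> C * x k powr \<alpha> \<le> x k powr \<beta> + c * (ln (x k) + 1)"
  shows False
proof -
  define \<gamma> where "\<gamma> = max \<beta> (\<alpha> / 2)"
  have a0: "\<alpha> > 0" using ab by linarith
  have g: "\<gamma> < \<alpha>" "\<gamma> \<ge> \<beta>" "\<gamma> \<ge> \<alpha> / 2" "\<gamma> \<ge> 0" using ab a0 by (auto simp: \<gamma>_def)
  define K where "K = 1 + c * (2 / \<alpha> + 1)"
  have K0: "K > 0" using c a0 unfolding K_def by (simp add: add_pos_nonneg)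
  define B where "B = (K / C + 1) powr (1 / (\<alpha> - \<gamma>))"
  obtain k where k: "k \<ge> 1" "x k > B" using unb by blast
  define y where "y = x k"
  have y1: "y \<ge> 1" using x1 k(1) y_def by simp
  have "ln y \<le> y powr (\<alpha> / 2) / (\<alpha> / 2)" by (rule ln_powr_bound[OF y1]) (use a0 in simp)
  also have "\<dots> \<le> y powr \<gamma> / (\<alpha> / 2)"
    using y1 g a0 by (intro divide_right_mono powr_mono) auto
  finally have lny: "ln y \<le> (2 / \<alpha>) * y powr \<gamma>" by (simp add: ac_simps)
  have yb: "y powr \<beta> \<le> y powr \<gamma>" using y1 g by (intro powr_mono) auto
  have y1g: "1 \<le> y powr \<gamma>" using y1 g by (simp add: ge_one_powr_ge_zero)
  have "C * y powr \<alpha> \<le> y powr \<beta> + c * (ln y + 1)" using bnd[OF k(1)] y_def by simp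
  also have "\<dots> \<le> y powr \<gamma> + c * ((2 / \<alpha>) * y powr \<gamma> + y powr \<gamma>)"
    using yb lny y1g c by (intro add_mono mult_left_mono) auto
  also have "\<dots> = K * y powr \<gamma>" unfolding K_def by (simp add: algebra_simps)
  finally have le: "C * y powr \<alpha> \<le> K * y powr \<gamma>" .
  have "y > B" using k y_def by simp
  hence "y powr (\<alpha> - \<gamma>) > B powr (\<alpha> - \<gamma>)"
    using g unfolding B_def by (intro powr_less_mono2) auto
  also have "B powr (\<alpha> - \<gamma>) = K / C + 1"
    unfolding B_def using g K0 C by (simp add: powr_powr)
  finally have "y powr (\<alpha> - \<gamma>) > K / C + 1" .
  hence "C * y powr (\<alpha> - \<gamma>) > K" using C by (simp add: field_simps)
  hence "C * y powr (\<alpha> - \<gamma>) * y powr \<gamma> > K * y powr \<gamma>"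
    using y1g by (intro mult_strict_right_mono) auto
  also have "C * y powr (\<alpha> - \<gamma>) * y powr \<gamma> = C * y powr \<alpha>"
    using y1 by (simp add: mult.assoc powr_add[symmetric])
  finally show False using le by simp
qed

context gm
begin

lemma mq_cong: "[int m ^ 2 = 1] (mod int qq)"
  using qq_int by (simp add: cong_iff_dvd_diff)

lemma upperE: "k \<ge> 1 \<Longrightarrow> int qq ^ k dvd int m ^ (2 * qq^(k-1)) - 1"
  using exactE by (metis dvd_triv_left)

lemma lowerE: "k \<ge> 1 \<Longrightarrow> int qq ^ k dvd int m ^ d - 1 \<Longrightarrow> 2 * qq^(k-1) dvd d"
proof (induction k arbitrary: d rule: dec_induct)
  case base
  show ?case
  proof (rule ccontr)
    assume "\<not> 2 * qq ^ (1 - 1) dvd d"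
    hence "odd d" by simp
    then obtain e where e: "d = 2 * e + 1" using oddE by blast
    have "[int m ^ d = (int m ^ 2) ^ e * int m] (mod int qq)"
      unfolding e by (simp only: power_add power_mult power_one_right cong_refl)
    also have "[(int m ^ 2) ^ e * int m = 1 ^ e * int m] (mod int qq)"
      by (intro cong_mult cong_pow mq_cong cong_refl)
    finally have "[int m ^ d = int m] (mod int qq)" by simp
    moreover have "[int m ^ d = 1] (mod int qq)" using base by (simp add: cong_iff_dvd_diff)
    ultimately have "[int m = 1] (mod int qq)" by (metis cong_sym cong_trans)
    hence dv: "int qq dvd int m - 1" by (simp add: cong_iff_dvd_diff)
    have "int m - 1 > 0" using m2 by simp
    hence "int qq \<le> int m - 1" using zdvd_imp_le[OF dv] by simp
    moreover have "int qq > int m - 1" unfolding qq_int using m2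
      by (simp add: power2_eq_square)
    ultimately show False by simp
  qed
next
  case (step k)
  have "int qq ^ k dvd int qq ^ Suc k" by (simp add: le_imp_power_dvd)
  hence "2 * qq ^ (k - 1) dvd d" using step.IH step.prems dvd_trans by blast
  then obtain e where e: "d = 2 * qq ^ (k - 1) * e" by blast
  obtain u where u: "int m ^ (2 * qq^(k-1)) - 1 = int qq ^ k * u" "coprime u (int qq)"
    using exactE[OF step(1)] by blast
  define x where "x = int m ^ (2 * qq^(k-1))"
  have md: "int m ^ d = x ^ e" unfolding x_def e by (simp add: power_mult)
  have "x ^ e - 1 = (x - 1) * (\<Sum>i<e. x^i)" by (rule power_diff_1_eq)
  hence "int m ^ d - 1 = int qq ^ k * (u * (\<Sum>i<e. x^i))" using md u(1) x_def by simp
  hence "int qq ^ k * int qq dvd int qq ^ k * (u * (\<Sum>i<e. x^i))" using step.prems by simp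
  hence "int qq dvd u * (\<Sum>i<e. x^i)" using qq3 by (subst (asm) dvd_mult_cancel_left) auto
  moreover have "coprime (int qq) u" using u(2) by (simp add: coprime_commute)
  ultimately have d1: "int qq dvd (\<Sum>i<e. x^i)" using coprime_dvd_mult_right_iff by blast
  have "int qq dvd x - 1" unfolding x_def u(1) using step(1)
    by (metis dvd_mult2 dvd_refl le_imp_power_dvd power_one_right)
  hence "[x = 1] (mod int qq)" by (simp add: cong_iff_dvd_diff)
  hence "[(\<Sum>i<e. x^i) = int e] (mod int qq)" by (rule geo_cong)
  hence "int qq dvd int e" using d1 by (metis cong_dvd_iff)
  hence "qq dvd e" by simp
  then obtain e' where "e = qq * e'" by blast
  hence "d = 2 * qq ^ (Suc k - 1) * e'" unfolding e using step(1)
    by (cases k) (auto simp: algebra_simps)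
  thus ?case by simp
qed

lemma cong_nat_int: "[a ^ d = 1] (mod n) \<longleftrightarrow> int n dvd int a ^ d - 1"
  by (metis cong_int_iff cong_iff_dvd_diff of_nat_1 of_nat_power)

lemma ord_qq: "k \<ge> 1 \<Longrightarrow> ord (qq ^ k) m = 2 * qq ^ (k - 1)"
proof -
  assume k: "k \<ge> 1"
  have "ord (qq ^ k) m dvd 2 * qq ^ (k - 1)"
    using upperE[OF k] ord_divides cong_nat_int by (metis of_nat_power)
  moreover have "2 * qq ^ (k - 1) dvd ord (qq ^ k) m"
    using lowerE[OF k] ord[of m "qq ^ k"] cong_nat_int by (metis of_nat_power)
  ultimately show ?thesis by (rule dvd_antisym)
qed

lemma coprime_qq: "coprime qq m"
proof (rule coprimeI)
  fix c assume c1: "c dvd qq" and c2: "c dvd m"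
  have "c dvd m * m" using c2 by simp
  hence "c dvd m * m - qq" by (rule dvd_diff_nat[OF _ c1])
  moreover have "qq = m * m - 1" by (simp add: qq_def power2_eq_square)
  moreover have "m * m \<ge> 1" using m2 by simp
  ultimately have "c dvd 1" by simp
  thus "is_unit c" by simp
qed

end

context gm
begin

lemma box_facts:
  assumes cop: "coprime N m" and N1: "N \<ge> 1" and L1: "L \<ge> 1" and oL: "ord N m dvd L"
  shows "card (RCOSETS G (HH N L)) = L * N" "finite (RCOSETS G (HH N L))"
    "cay_diam G {genA, genT} (HH N L) \<ge> L div 2"
    "\<And>n. N \<le> m ^ n \<Longrightarrow> cay_diam G {genA, genT} (HH N L) \<le> L + n * m + n"
    "HH N L \<lhd> G"
proof -
  interpret h: hh m N L by unfold_locales (use assms m2 in auto)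
  show "card (RCOSETS G (HH N L)) = L * N" by (rule h.card_rcosets)
  show "finite (RCOSETS G (HH N L))" by (rule h.finite_rcosets)
  show "cay_diam G {genA, genT} (HH N L) \<ge> L div 2" by (rule h.diam_ge)
  show "\<And>n. N \<le> m ^ n \<Longrightarrow> cay_diam G {genA, genT} (HH N L) \<le> L + n * m + n" by (rule h.diam_le)
  show "HH N L \<lhd> G" by (rule h.H_normal)
qed

lemma ord_pos: assumes "coprime N m" shows "ord N m \<ge> 1"
proof -
  have "ord N m \<noteq> 0" using assms ord_eq_0[of N m] by simp
  thus ?thesis by (simp add: Suc_le_eq)
qed

lemma one_le_rmult: "1 \<le> a \<Longrightarrow> 1 \<le> b \<Longrightarrow> (1::real) \<le> real a * real b"
  using mult_mono[of 1 "real a" 1 "real b"] by simp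

lemma ord_le: assumes "coprime N m" "N \<ge> 1" shows "ord N m \<le> N"
proof -
  have "ord N m dvd totient N" using order_divides_totient[of N m] assms(1) by (simp add: coprime_commute)
  hence "ord N m \<le> totient N" using assms(2) by (intro dvd_imp_le) auto
  thus ?thesis using totient_le[of N] by simp
qed

lemma arith_grow: assumes "arith_seq m N" shows "k \<ge> 1 \<Longrightarrow> N k \<ge> k + 1"
proof (induction k rule: dec_induct)
  case base thus ?case using assms unfolding arith_seq_def by auto
next
  case (step k) thus ?case using assms unfolding arith_seq_def by (metis Suc_eq_plus1 Suc_le_eq le_less_trans)
qed

lemma arith_k: assumes "arith_seq m N" "k \<ge> 1"
  shows "coprime (N k) m" "N k \<ge> 1" "N k \<ge> 2" "N k dvd N (Suc k)" "N k < N (Suc k)"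
  using assms unfolding arith_seq_def by auto

lemma cong_facts:
  assumes cop: "coprime N m" and N1: "N \<ge> 1"
  shows "card (RCOSETS G (Gm_cong m N)) = ord N m * N"
    "cay_diam G {genA, genT} (Gm_cong m N) \<ge> ord N m div 2"
    "\<And>n. N \<le> m ^ n \<Longrightarrow> cay_diam G {genA, genT} (Gm_cong m N) \<le> ord N m + n * m + n"
  unfolding Gm_cong_eq[OF cop N1]
  using box_facts[OF cop N1 ord_pos[OF cop] dvd_refl] by auto

lemma ln2_lt1: "ln (2::real) < 1"
  by (rule ln_2_less_1)

lemma log2_bound:
  fixes y :: real and a :: real
  assumes "a \<ge> 0"
  shows "a * (ln y / ln 2 + 1) \<le> (a / ln 2) * (ln y + 1)"
proof -
  have "1 \<le> 1 / ln (2::real)" using ln2_lt1 by simp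
  hence "a * 1 \<le> a * (1 / ln 2)" using assms by (intro mult_left_mono) auto
  hence aa: "a \<le> a / ln 2" by simp
  have "a * (ln y / ln 2 + 1) = (a / ln 2) * ln y + a" by (simp add: algebra_simps)
  also have "\<dots> \<le> (a / ln 2) * ln y + a / ln 2" using aa by (rule add_left_mono)
  also have "\<dots> = (a / ln 2) * (ln y + 1)" by (simp only: distrib_left mult_1_right)
  finally show ?thesis .
qed

theorem part1:
  assumes N: "arith_seq m N" and a: "0 < \<alpha>" "\<alpha> \<le> 1"
    and D: "property_D G {genA, genT} (arith_box m N) \<alpha>"
  shows "\<alpha> \<le> 1/2"
proof (rule ccontr)
  assume "\<not> \<alpha> \<le> 1/2"
  hence a2: "1/2 < \<alpha>" by simp
  obtain C where C: "C > 0" and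
    DC: "\<And>k. k \<ge> 1 \<Longrightarrow> real (cay_diam G {genA, genT} (Gm_cong m (N k))) \<ge> C * real (card (RCOSETS G (Gm_cong m (N k)))) powr \<alpha>"
    using D unfolding property_D_def by blast
  define x where "x k = real (ord (N k) m * N k)" for k
  define c where "c = real (m + 1) / ln 2"
  show False
  proof (rule AN[of "1/2" \<alpha> C c x])
    show "1/2 < \<alpha>" "(0::real) \<le> 1/2" "C > 0" by (fact a2, simp, fact C)
    show "c \<ge> 0" unfolding c_def by simp
    show "x k \<ge> 1" if k: "k \<ge> 1" for k
      using one_le_rmult[OF ord_pos[OF arith_k(1)[OF N k]] arith_k(2)[OF N k]] unfolding x_def by simp
    show "\<exists>k\<ge>1. x k > B" for B
    proof -
      define k where "k = nat \<lceil>B\<rceil> + 1"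
      have k1: "k \<ge> 1" unfolding k_def by simp
      have "real (N k) \<ge> real k + 1" using arith_grow[OF N k1] by simp
      moreover have "x k \<ge> real (N k)"
        using ord_pos[OF arith_k(1)[OF N k1]] mult_right_mono[of 1 "real (ord (N k) m)" "real (N k)"]
        unfolding x_def by simp
      moreover have "real k \<ge> B" unfolding k_def by linarith
      ultimately show ?thesis using k1 by (intro exI[of _ k]) auto
    qed
    show "C * x k powr \<alpha> \<le> x k powr (1/2) + c * (ln (x k) + 1)" if k: "k \<ge> 1" for k
    proof -
      note cop = arith_k(1)[OF N k] and N1 = arith_k(2)[OF N k]
      define o' where "o' = ord (N k) m"
      define n where "n = nat \<lceil>log 2 (real (N k))\<rceil>"
      have Nr: "real (N k) \<ge> 1" using N1 by simp
      have "real (N k) = 2 powr (log 2 (real (N k)))" using Nr by simp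
      also have "\<dots> \<le> 2 powr (real n)" unfolding n_def by (intro powr_mono real_nat_ceiling_ge) auto
      also have "\<dots> = real (2 ^ n)" by (simp add: powr_realpow)
      finally have "N k \<le> 2 ^ n" by linarith
      also have "\<dots> \<le> m ^ n" using m2 by (simp add: power_mono)
      finally have Nn: "N k \<le> m ^ n" .
      have o1: "o' \<ge> 1" using ord_pos[OF cop] o'_def by simp
      have oN: "o' \<le> N k" using ord_le[OF cop N1] o'_def by simp
      have xk: "x k = real o' * real (N k)" unfolding x_def o'_def by simp
      have x1: "x k \<ge> 1" using one_le_rmult[OF o1 N1] xk by simp
      have l0: "log 2 (real (N k)) \<ge> 0" using Nr by simp
      hence "real n = of_int \<lceil>log 2 (real (N k))\<rceil>" unfolding n_def by simp
      hence "real n \<le> log 2 (real (N k)) + 1"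
        using ceiling_correct[of "log 2 (real (N k))"] by linarith
      also have "log 2 (real (N k)) \<le> log 2 (x k)" using xk o1 Nr by simp
      finally have nb: "real n \<le> ln (x k) / ln 2 + 1" by (simp add: log_def)
      have "real o' = sqrt (real o' * real o')" by simp
      also have "\<dots> \<le> sqrt (x k)" unfolding xk using oN by (intro real_sqrt_le_mono mult_left_mono) auto
      finally have ob: "real o' \<le> x k powr (1/2)" using x1 by (simp add: powr_half_sqrt)
      have "C * x k powr \<alpha> \<le> real (cay_diam G {genA, genT} (Gm_cong m (N k)))"
        using DC[OF k] cong_facts(1)[OF cop N1] xk o'_def by (simp add: mult.commute)
      also have "\<dots> \<le> real (o' + n * m + n)"
        using cong_facts(3)[OF cop N1 Nn] o'_def by (simp only: of_nat_le_iff)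
      also have "\<dots> = real o' + real (m + 1) * real n" by (simp add: algebra_simps)
      also have "\<dots> \<le> x k powr (1/2) + real (m + 1) * (ln (x k) / ln 2 + 1)"
        using ob nb by (intro add_mono mult_left_mono) auto
      also have "\<dots> \<le> x k powr (1/2) + c * (ln (x k) + 1)"
        unfolding c_def using log2_bound[of "real (m + 1)" "x k"] by simp
      finally show ?thesis .
    qed
  qed
qed

end

context gm
begin

lemma qq_eq: "qq = m^2 - 1" by (simp add: qq_def)

lemma arith_qq: "arith_seq m (\<lambda>k. qq ^ k)"
  unfolding arith_seq_def
proof (intro allI impI conjI)
  fix k :: nat assume k: "k \<ge> 1"
  have "qq \<le> qq ^ k" using k qq3 by (simp add: self_le_power)
  thus "2 \<le> qq ^ k" using qq3 by simp
  show "coprime (qq ^ k) m" using coprime_qq by simp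
  show "qq ^ k < qq ^ Suc k" using qq3 by (simp add: power_strict_increasing_iff)
  show "qq ^ k dvd qq ^ Suc k" by (simp add: le_imp_power_dvd)
qed

lemma part2_D: "property_D G {genA, genT} (arith_box m (\<lambda>k. qq ^ k)) (1/2)"
  unfolding property_D_def
proof (intro exI[of _ "1 / sqrt (2 * real qq)"] conjI allI impI)
  show "0 < 1 / sqrt (2 * real qq)" using qq3 by simp
  fix k :: nat assume k: "k \<ge> 1"
  have cop: "coprime (qq ^ k) m" using coprime_qq by simp
  have N1: "qq ^ k \<ge> 1" using qq3 by simp
  have o: "ord (qq ^ k) m = 2 * qq ^ (k - 1)" by (rule ord_qq[OF k])
  define X where "X = real qq ^ (k - 1)"
  have qk: "qq ^ k = qq * qq ^ (k - 1)" using k by (cases k) auto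
  have card: "real (card (RCOSETS G (Gm_cong m (qq ^ k)))) = (2 * real qq) * X^2"
    using cong_facts(1)[OF cop N1] o qk unfolding X_def by (simp add: power2_eq_square power_mult_distrib)
  have diam: "real (cay_diam G {genA, genT} (Gm_cong m (qq ^ k))) \<ge> X"
  proof -
    have "cay_diam G {genA, genT} (Gm_cong m (qq ^ k)) \<ge> 2 * qq ^ (k - 1) div 2"
      using cong_facts(2)[OF cop N1] o by simp
    thus ?thesis unfolding X_def by simp
  qed
  have X0: "X \<ge> 0" unfolding X_def by simp
  have "1 / sqrt (2 * real qq) * real (card (RCOSETS G (Gm_cong m (qq ^ k)))) powr (1 / 2)
      = 1 / sqrt (2 * real qq) * (sqrt (2 * real qq) * X)"
    unfolding card using X0 qq3 by (simp add: powr_half_sqrt real_sqrt_mult)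
  also have "\<dots> = X" using qq3 by simp
  finally show "1 / sqrt (2 * real qq) * real (card (RCOSETS G (arith_box m (\<lambda>k. qq ^ k) k))) powr (1 / 2)
      \<le> real (cay_diam G {genA, genT} (arith_box m (\<lambda>k. qq ^ k) k))" using diam by simp
qed

theorem part2:
  "(\<exists>N. arith_seq m N \<and> property_D G {genA, genT} (arith_box m N) (1/2))
      \<and> (let N = (\<lambda>k. (m^2 - 1)^k) in
           arith_seq m N \<and> property_D G {genA, genT} (arith_box m N) (1/2) \<and>
           (\<forall>k\<ge>1. ord (N k) m = 2 * (m^2 - 1)^(k - 1)))"
  using arith_qq part2_D ord_qq unfolding qq_eq Let_def by blast

definition NN :: "nat \<Rightarrow> nat" where "NN k = m ^ (2 ^ k) - 1"

lemma mpow_ge: "m ^ (2 ^ k) \<ge> 2 ^ (2 ^ k)" using m2 by (simp add: power_mono)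

lemma arith_NN: "arith_seq m NN"
  unfolding arith_seq_def
proof (intro allI impI conjI)
  fix k :: nat assume k: "k \<ge> 1"
  have "(2::nat) ^ 2 \<le> 2 ^ (2 ^ k)" using k by (intro power_increasing) (auto simp: self_le_power)
  hence m4: "m ^ (2 ^ k) \<ge> 4" using mpow_ge[of k] by (simp del: power_mono_iff)
  thus "2 \<le> NN k" unfolding NN_def by simp
  show "coprime (NN k) m"
  proof (rule coprimeI)
    fix c assume c1: "c dvd NN k" and c2: "c dvd m"
    have "m dvd m ^ (2 ^ k)" by (rule dvd_power) simp
    hence "c dvd m ^ (2 ^ k)" using c2 by (rule dvd_trans[rotated])
    hence "c dvd m ^ (2 ^ k) - NN k" using c1 by (rule dvd_diff_nat)
    moreover have "m ^ (2 ^ k) - NN k = 1" using m4 unfolding NN_def by simp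
    ultimately show "is_unit c" by simp
  qed
  have "m ^ (2 ^ k) < m ^ (2 ^ Suc k)" using m2 by (intro power_strict_increasing) auto
  thus "NN k < NN (Suc k)" using m4 unfolding NN_def by simp
  have "m ^ (2 ^ Suc k) = m ^ (2 ^ k) * m ^ (2 ^ k)" by (simp add: mult_2 power_add)
  hence "NN (Suc k) = NN k * (m ^ (2 ^ k) + 1)" using m4 unfolding NN_def
    by (simp add: algebra_simps)
  thus "NN k dvd NN (Suc k)" by simp
qed

lemma part3_notD:
  assumes a: "0 < \<alpha>"
  shows "\<not> property_D G {genA, genT} (arith_box m NN) \<alpha>"
proof
  assume D: "property_D G {genA, genT} (arith_box m NN) \<alpha>"
  obtain C where C: "C > 0" and
    DC: "\<And>k. k \<ge> 1 \<Longrightarrow> real (cay_diam G {genA, genT} (Gm_cong m (NN k))) \<ge> C * real (card (RCOSETS G (Gm_cong m (NN k)))) powr \<alpha>"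
    using D unfolding property_D_def by blast
  define x where "x k = real (NN k)" for k
  define c where "c = real (m + 2) / ln 2"
  show False
  proof (rule AN[of 0 \<alpha> C c x])
    show "0 < \<alpha>" "(0::real) \<le> 0" "C > 0" by (fact a, simp, fact C)
    show "c \<ge> 0" unfolding c_def by simp
    show "x k \<ge> 1" if k: "k \<ge> 1" for k
      using arith_k(2)[OF arith_NN k] unfolding x_def by simp
    show "\<exists>k\<ge>1. x k > B" for B
    proof -
      define k where "k = nat \<lceil>B\<rceil> + 1"
      have k1: "k \<ge> 1" unfolding k_def by simp
      have "real (NN k) \<ge> real k + 1" using arith_grow[OF arith_NN k1] by simp
      moreover have "real k \<ge> B" unfolding k_def by linarith
      ultimately show ?thesis using k1 unfolding x_def by (intro exI[of _ k]) auto
    qed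
    show "C * x k powr \<alpha> \<le> x k powr 0 + c * (ln (x k) + 1)" if k: "k \<ge> 1" for k
    proof -
      note cop = arith_k(1)[OF arith_NN k] and N1 = arith_k(2)[OF arith_NN k]
      define o' where "o' = ord (NN k) m"
      have mk: "m ^ (2 ^ k) = NN k + 1" using N1 unfolding NN_def by simp
      have Nn: "NN k \<le> m ^ (2 ^ k)" using mk by simp
      have "int (m ^ (2 ^ k)) = int (NN k) + 1" using mk by simp
      hence "int m ^ (2 ^ k) - 1 = int (NN k)" by simp
      hence "[m ^ (2 ^ k) = 1] (mod NN k)"
        unfolding cong_nat_int by simp
      hence "o' dvd 2 ^ k" using ord_divides o'_def by blast
      hence ok: "o' \<le> 2 ^ k" by (intro dvd_imp_le) auto
      have o1: "o' \<ge> 1" using ord_pos[OF cop] o'_def by simp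
      have xk: "x k \<ge> 1" using N1 unfolding x_def by simp
      have "real (card (RCOSETS G (Gm_cong m (NN k)))) = real o' * x k"
        using cong_facts(1)[OF cop N1] o'_def x_def by simp
      also have "\<dots> \<ge> x k" using o1 xk mult_right_mono[of 1 "real o'" "x k"] by simp
      finally have cx: "real (card (RCOSETS G (Gm_cong m (NN k)))) \<ge> x k" .
      have "2 ^ (2 ^ k) \<le> NN k + 1" using mpow_ge[of k] mk by simp
      hence "real (2 ^ (2 ^ k)) \<le> x k + 1" unfolding x_def by (simp only: of_nat_le_iff of_nat_add of_nat_1)
      moreover have "(2::real) powr (real (2 ^ k)) = real (2 ^ (2 ^ k))"
        using powr_realpow[of "2::real" "2^k"] by simp
      ultimately have "(2::real) powr (real (2 ^ k)) \<le> x k + 1" by simp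
      hence "real (2 ^ k) \<le> log 2 (x k + 1)" using xk by (subst le_log_iff) auto
      also have "\<dots> \<le> log 2 (2 * x k)" using xk by simp
      also have "\<dots> = 1 + ln (x k) / ln 2" using xk by (simp add: log_def ln_mult add_divide_distrib)
      finally have tk: "real (2 ^ k) \<le> ln (x k) / ln 2 + 1" by simp
      have "C * x k powr \<alpha> \<le> C * real (card (RCOSETS G (Gm_cong m (NN k)))) powr \<alpha>"
        using cx xk C a by (intro mult_left_mono powr_mono2) auto
      also have "\<dots> \<le> real (cay_diam G {genA, genT} (Gm_cong m (NN k)))" by (rule DC[OF k])
      also have "\<dots> \<le> real (o' + 2 ^ k * m + 2 ^ k)"
        using cong_facts(3)[OF cop N1 Nn] o'_def by (simp only: of_nat_le_iff)
      also have "\<dots> \<le> real (m + 2) * real (2 ^ k)" using ok by (simp add: algebra_simps)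
      also have "\<dots> \<le> real (m + 2) * (ln (x k) / ln 2 + 1)" using tk by (intro mult_left_mono) auto
      also have "\<dots> \<le> c * (ln (x k) + 1)" unfolding c_def by (rule log2_bound) simp
      also have "\<dots> \<le> x k powr 0 + c * (ln (x k) + 1)" using xk by simp
      finally show ?thesis .
    qed
  qed
qed

theorem part3:
  "(\<exists>N. arith_seq m N \<and>
          (\<forall>\<alpha>. 0 < \<alpha> \<and> \<alpha> \<le> 1/2 \<longrightarrow> \<not> property_D G {genA, genT} (arith_box m N) \<alpha>))
      \<and> (let N = (\<lambda>k. m^(2^k) - 1) in
           arith_seq m N \<and>
           (\<forall>\<alpha>. 0 < \<alpha> \<and> \<alpha> \<le> 1/2 \<longrightarrow> \<not> property_D G {genA, genT} (arith_box m N) \<alpha>))"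
proof -
  have e: "(\<lambda>k. m^(2^k) - 1) = NN" by (simp add: NN_def fun_eq_iff)
  show ?thesis unfolding e Let_def using arith_NN part3_notD by blast
qed

end

context gm
begin

theorem part4:
  assumes a: "0 < \<alpha>" "\<alpha> < 1" and N: "arith_seq m N"
  shows "\<exists>M. box_space G M \<and> property_D G {genA, genT} M \<alpha> \<and> (\<forall>k\<ge>1. M k \<subseteq> Gm_cong m (N k))"
proof -
  define e where "e = nat \<lceil>\<alpha> / (1 - \<alpha>)\<rceil> + 1"
  define L :: "nat \<Rightarrow> nat" where "L k = fact (N k ^ e)" for k
  define M where "M k = HH (N k) (L k)" for k
  have e1: "e \<ge> 1" unfolding e_def by simp
  have ee: "\<alpha> / (1 - \<alpha>) \<le> real e" unfolding e_def using real_nat_ceiling_ge[of "\<alpha> / (1 - \<alpha>)"] by simp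
  have NNe: "N k \<le> N k ^ e" if k: "k \<ge> 1" for k
    using arith_k(2)[OF N k] e1 by (simp add: self_le_power)
  have LN: "N k ^ e \<le> L k" for k unfolding L_def by (rule fact_ge_self)
  have L2: "L k \<ge> 2" if k: "k \<ge> 1" for k using NNe[OF k] LN[of k] arith_k(3)[OF N k] by simp
  have oL: "ord (N k) m dvd L k" if k: "k \<ge> 1" for k
    unfolding L_def using ord_pos[OF arith_k(1)[OF N k]] ord_le[OF arith_k(1)[OF N k] arith_k(2)[OF N k]] NNe[OF k]
    by (intro dvd_fact) auto
  have LL: "L k dvd L (Suc k)" if k: "k \<ge> 1" for k
    unfolding L_def using arith_k(5)[OF N k] by (intro fact_dvd power_mono) auto
  note bf = box_facts[OF arith_k(1)[OF N] arith_k(2)[OF N] _ oL]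
  have box: "box_space G M"
    unfolding box_space_def
  proof (intro conjI allI impI)
    show "group G" by (rule group_G)
  next
    fix k :: nat assume k: "k \<ge> 1"
    show "M k \<lhd> G" unfolding M_def using bf(5)[OF k k _ k] L2[OF k] by simp
    show "finite (RCOSETS G (M k))" unfolding M_def using bf(2)[OF k k _ k] L2[OF k] by simp
    show "M (Suc k) \<subseteq> M k" unfolding M_def using arith_k(4)[OF N k] LL[OF k] by (rule HH_mono)
  next
    show "(\<Inter>k\<in>{1..}. M k) = {\<one>\<^bsub>G\<^esub>}"
    proof (rule equalityI)
      show "{\<one>\<^bsub>G\<^esub>} \<subseteq> (\<Inter>k\<in>{1..}. M k)" unfolding M_def by simp
    next
      show "(\<Inter>k\<in>{1..}. M k) \<subseteq> {\<one>\<^bsub>G\<^esub>}"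
      proof (rule subsetI)
      fix x assume memx: "x \<in> (\<Inter>k\<in>{1..}. M k)"
      obtain j r where jr: "x = (j, r)" by (cases x)
      have mem: "(j, r) \<in> (\<Inter>k\<in>{1..}. M k)" using memx jr by simp
      hence memk: "r \<in> Z" "int (L k) dvd j" "zc (N k) r" if "k \<ge> 1" for k
        using that unfolding M_def by auto
      have "j = 0"
      proof (rule ccontr)
        assume j0: "j \<noteq> 0"
        define k where "k = nat \<bar>j\<bar> + 1"
        have k1: "k \<ge> 1" unfolding k_def by simp
        have "int (L k) \<le> \<bar>j\<bar>" using dvd_imp_le_int[OF j0 memk(2)[OF k1]] by simp
        moreover have "L k \<ge> k + 1" using arith_grow[OF N k1] NNe[OF k1] LN[of k] by simp
        ultimately show False unfolding k_def by simp
      qed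
      moreover have "r = 0"
      proof -
        obtain a t where at: "r = of_int a / of_nat m ^ t" using memk(1)[of 1] unfolding Zinv_iff by auto
        have ra: "of_nat m ^ t * r = of_int a" unfolding at by simp
        have dv: "int (N k) dvd a" if k: "k \<ge> 1" for k
        proof -
          have "zc (N k) (of_nat m ^ t * r)" using memk(3)[OF k] by (intro zc_multL) auto
          thus ?thesis unfolding ra using zc_int[OF arith_k(1)[OF N k]] by blast
        qed
        have "a = 0"
        proof (rule ccontr)
          assume a0: "a \<noteq> 0"
          define k where "k = nat \<bar>a\<bar> + 1"
          have k1: "k \<ge> 1" unfolding k_def by simp
          have "int (N k) \<le> \<bar>a\<bar>" using dvd_imp_le_int[OF a0 dv[OF k1]] by simp
          moreover have "N k \<ge> k + 1" using arith_grow[OF N k1] by simp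
          ultimately show False unfolding k_def by simp
        qed
        thus ?thesis using at by simp
      qed
      ultimately show "x \<in> {\<one>\<^bsub>G\<^esub>}" using jr by simp
      qed
    qed
  qed
  have D: "property_D G {genA, genT} M \<alpha>"
    unfolding property_D_def
  proof (intro exI[of _ "1/4"] conjI allI impI)
    show "(0::real) < 1/4" by simp
    fix k :: nat assume k: "k \<ge> 1"
    define l where "l = real (L k)"
    define n where "n = real (N k)"
    have l2: "l \<ge> 2" using L2[OF k] unfolding l_def by simp
    have n1: "n \<ge> 1" using arith_k(2)[OF N k] unfolding n_def by simp
    have card: "real (card (RCOSETS G (M k))) = l * n"
      unfolding M_def l_def n_def using bf(1)[OF k k _ k] L2[OF k] by simp
    have "4 * (L k div 2) \<ge> L k" using L2[OF k] by linarith
    hence diam: "real (cay_diam G {genA, genT} (M k)) \<ge> l / 4"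
      unfolding M_def l_def using bf(3)[OF k k _ k] L2[OF k] by simp
    have "n powr (\<alpha> / (1 - \<alpha>)) \<le> n powr (real e)" using n1 ee by (intro powr_mono) auto
    also have "\<dots> = real (N k ^ e)" unfolding n_def using n1 powr_realpow[of "real (N k)" e] by (simp add: n_def)
    also have "\<dots> \<le> l" unfolding l_def using LN[of k] by (simp only: of_nat_le_iff)
    finally have nl: "n powr (\<alpha> / (1 - \<alpha>)) \<le> l" .
    have "n powr \<alpha> = (n powr (\<alpha> / (1 - \<alpha>))) powr (1 - \<alpha>)" using a by (simp add: powr_powr)
    also have "\<dots> \<le> l powr (1 - \<alpha>)" using nl a n1 by (intro powr_mono2) auto
    finally have "n powr \<alpha> \<le> l powr (1 - \<alpha>)" .
    hence "(l * n) powr \<alpha> \<le> l powr \<alpha> * l powr (1 - \<alpha>)"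
      using l2 n1 by (simp add: powr_mult mult_left_mono)
    also have "\<dots> = l" using l2 by (simp add: powr_add[symmetric])
    finally have "(l * n) powr \<alpha> \<le> l" .
    thus "1/4 * real (card (RCOSETS G (M k))) powr \<alpha> \<le> real (cay_diam G {genA, genT} (M k))"
      unfolding card using diam by simp
  qed
  have sub: "M k \<subseteq> Gm_cong m (N k)" if k: "k \<ge> 1" for k
    unfolding M_def Gm_cong_eq[OF arith_k(1)[OF N k] arith_k(2)[OF N k]]
    by (rule HH_mono[OF dvd_refl oL[OF k]])
  show ?thesis using box D sub by blast
qed

end

theorem theorem1p2:
  fixes m :: nat
  assumes "m \<ge> 2"
  shows
    "(\<forall>N \<alpha>. arith_seq m N \<and> 0 < \<alpha> \<and> \<alpha> \<le> 1 \<and>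
            property_D (Gm m) {genA, genT} (arith_box m N) \<alpha> \<longrightarrow> \<alpha> \<le> 1/2)
   \<and> ((\<exists>N. arith_seq m N \<and> property_D (Gm m) {genA, genT} (arith_box m N) (1/2))
      \<and> (let N = (\<lambda>k. (m^2 - 1)^k) in
           arith_seq m N \<and> property_D (Gm m) {genA, genT} (arith_box m N) (1/2) \<and>
           (\<forall>k\<ge>1. ord (N k) m = 2 * (m^2 - 1)^(k - 1))))
   \<and> ((\<exists>N. arith_seq m N \<and>
          (\<forall>\<alpha>. 0 < \<alpha> \<and> \<alpha> \<le> 1/2 \<longrightarrow> \<not> property_D (Gm m) {genA, genT} (arith_box m N) \<alpha>))
      \<and> (let N = (\<lambda>k. m^(2^k) - 1) in
           arith_seq m N \<and>
           (\<forall>\<alpha>. 0 < \<alpha> \<and> \<alpha> \<le> 1/2 \<longrightarrow> \<not> property_D (Gm m) {genA, genT} (arith_box m N) \<alpha>)))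
   \<and> (\<forall>\<alpha>. 0 < \<alpha> \<and> \<alpha> < 1 \<longrightarrow>
        (\<forall>N. arith_seq m N \<longrightarrow>
          (\<exists>M. box_space (Gm m) M \<and> property_D (Gm m) {genA, genT} M \<alpha> \<and>
               (\<forall>k\<ge>1. M k \<subseteq> Gm_cong m (N k)))))"
proof -
  interpret gm m by unfold_locales (rule assms)
  show ?thesis using part1 part2 part3 part4 by blast
qed


end
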